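(* Let $\mathcal T$ be a set of at least two binary trees over $L$, let $\mathcal F=\{C_1,\dots,C_k\}$ be an acyclic agreement forest for $\mathcal T$ indexed so that $(C_1,\dots,C_k)$ is a topological ordering of $G(\mathcal T,\mathcal F)$, and let $\sigma$ be a leaf ordering such that for all $i<j$, every $l\in L(C_i)\setminus\{\rho\}$ satisfies $\sigma(l)<\sigma(l')$ for every $l'\in L(C_j)\setminus\{\rho\}$. Fix $i$ with $L(C_i)\setminus\{\rho\}\ne\emptyset$, let $l_s$ be the $\sigma$-first leaf of $L(C_i)\setminus\{\rho\}$, and let $l_j\in L(C_i)$ with $j\ge s$. Then for every $T\in\mathcal T$ there is a vertex $x$ of $T^j$ such that the subtree $(T^j)_x$ is (label-preservingly) isomorphic to $C_i|_{\{l_s,\dots,l_j\}\cap L(C_i)}$, and the vertices of these subtrees are indexed identically across $\mathcal T$: if $T,T'\in\mathcal T$ with corresponding vertices $x,x'$, and $v\in V((T^j)_x)$, $v'\in V((T'^j)_{x'})$ satisfy $L((T^j)_v)=L((T'^j)_{v'})$, then $\sigma(v)=\sigma(v')$ (indices computed in $T^j$ and $T'^j$ respectively).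
   Context: Trees. Fix a finite label set $L$ containing a distinguished label $\rho$, and let $n=|L\setminus\{\rho\}|$. A (planted, binary phylogenetic) tree $T$ over $L$ is a rooted tree whose top vertex is labeled $\rho$ and has exactly one child $r(T)$ (the root), in which every other non-leaf vertex has exactly two children, and whose leaves are bijectively labeled by $L\setminus\{\rho\}$; vertices are identified with their labels. For a vertex $v$, $T_v$ is the subtree rooted at $v$ and $cl(v)=L(T_v)$ is its cluster ($L(\cdot)$ denotes the set of labels of a tree). For $S\subseteq L$, $T(S)$ is the smallest subtree of $T$ containing all vertices labeled by $S$, and $T|_S$ is obtained from $T(S)$ by suppressing all unlabeled vertices with fewer than two children. OLA indexing. A leaf ordering is a bijection $\sigma:L\setminus\{\rho\}\to\{0,\dots,n-1\}$; write $l_i=\sigma^{-1}(i)$. For a binary tree $T$ whose non-$\rho$ labels lie in $L\setminus\{\rho\}$ and a vertex $v\ne\rho$, let $\mu(v)=\min\{\sigma(l): l\in L(T_v)\setminus\{\rho\}\}$; each leaf $l$ gets index $\sigma(l)$, and each internal vertex $v$ (not a leaf, not $\rho$) with children $v_1,v_2$ gets index $\sigma(v):=-\max\{\mu(v_1),\mu(v_2)\}$. Let $T^i:=T|_{\{\rho,l_0,\dots,l_i\}}$. Agreement forests. A forest $\mathcal F=\{C_1,\dots,C_k\}$ of trees with pairwise disjoint label sets agrees with a tree $T$ over $L$ if (i) for each $C_i$, $T|_{L(C_i)}$ is isomorphic to $C_i$ (label-preserving); (ii) the subtrees $T(L(C_i))$ are pairwise vertex-disjoint; (iii) $\bigcup_i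 L(C_i)=L$. $\mathcal F$ is an agreement forest for a set $\mathcal T$ of trees if it agrees with every $T\in\mathcal T$. The inheritance graph $G(\mathcal T,\mathcal F)$ is the directed graph on vertex set $\mathcal F$ with an edge $(C_i,C_j)$, $i\neq j$, iff some $T\in\mathcal T$ contains a directed (root-to-leaf direction) path from the root of $T(L(C_i))$ to the root of $T(L(C_j))$. $\mathcal F$ is an acyclic agreement forest (AAF) if additionally $G(\mathcal T,\mathcal F)$ has no directed cycle. *)

theory Defs
  imports Main
begin

text \<open>
  A rooted tree in which every non-leaf vertex other than the
  top vertex rho has two children (and rho has one child) is, up to label-preserving
  isomorphism, determined by the family of its clusters, and distinct vertices have distinct
  clusters.  We therefore represent such a tree by its set of clusters
  (a set of label sets): the vertex v is represented by cl(v) = L(T_v).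
  The top vertex rho has cluster L, the root r(T) has cluster L - {rho}, a leaf l has
  cluster {l}.  u is an ancestor of w (there is a directed root-to-leaf path from u to w)
  iff cl(w) is a subset of cl(u).  Label-preserving isomorphism of such trees is equality
  of cluster families.
\<close>

type_synonym 'a ctree = "'a set set"

definition labels :: "'a ctree \<Rightarrow> 'a set" where
  "labels T = \<Union> T"

definition is_tree :: "'a set \<Rightarrow> 'a \<Rightarrow> 'a ctree \<Rightarrow> bool" where
  "is_tree L \<rho> T \<longleftrightarrow>
     finite L \<and> \<rho> \<in> L \<and> L - {\<rho>} \<noteq> {} \<and>
     (\<forall>c\<in>T. c \<subseteq> L \<and> c \<noteq> {}) \<and>
     L \<in> T \<and> L - {\<rho>} \<in> T \<and>
     (\<forall>c\<in>T. c \<noteq> L \<longrightarrow> \<rho> \<notin> c) \<and>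
     (\<forall>l\<in>L - {\<rho>}. {l} \<in> T) \<and>
     (\<forall>c\<in>T. \<forall>d\<in>T. c \<subseteq> d \<or> d \<subseteq> c \<or> c \<inter> d = {}) \<and>
     (\<forall>c\<in>T. c \<noteq> L \<and> card c \<ge> 2 \<longrightarrow>
        (\<exists>c1\<in>T. \<exists>c2\<in>T. c1 \<noteq> {} \<and> c2 \<noteq> {} \<and> c1 \<inter> c2 = {} \<and> c1 \<union> c2 = c))"

text \<open>The restriction T|_S (obtained from T(S) by suppressing unlabelled vertices with
  fewer than two children).\<close>
definition restrict :: "'a ctree \<Rightarrow> 'a set \<Rightarrow> 'a ctree" where
  "restrict T S = {c \<inter> S | c. c \<in> T \<and> c \<inter> S \<noteq> {}}"

definition subtree :: "'a ctree \<Rightarrow> 'a set \<Rightarrow> 'a ctree" where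
  "subtree T v = {c \<in> T. c \<subseteq> v}"

definition span_root :: "'a ctree \<Rightarrow> 'a set \<Rightarrow> 'a set" where
  "span_root T S = (THE c. c \<in> T \<and> S \<subseteq> c \<and> (\<forall>d\<in>T. S \<subseteq> d \<longrightarrow> c \<subseteq> d))"

text \<open>Vertex set of T(S), the smallest subtree containing all vertices labelled by S.\<close>
definition span_vertices :: "'a ctree \<Rightarrow> 'a set \<Rightarrow> 'a set set" where
  "span_vertices T S = {c \<in> T. c \<subseteq> span_root T S \<and> c \<inter> S \<noteq> {}}"

definition agrees :: "'a set \<Rightarrow> 'a ctree set \<Rightarrow> 'a ctree \<Rightarrow> bool" where
  "agrees L F T \<longleftrightarrow>
     (\<forall>C\<in>F. C \<noteq> {}) \<and>
     (\<forall>C\<in>F. \<forall>D\<in>F. C \<noteq> D \<longrightarrow> labels C \<inter> labels D = {}) \<and>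
     (\<forall>C\<in>F. restrict T (labels C) = C) \<and>
     (\<forall>C\<in>F. \<forall>D\<in>F. C \<noteq> D \<longrightarrow> span_vertices T (labels C) \<inter> span_vertices T (labels D) = {}) \<and>
     \<Union> (labels ` F) = L"

definition agreement_forest :: "'a set \<Rightarrow> 'a ctree set \<Rightarrow> 'a ctree set \<Rightarrow> bool" where
  "agreement_forest L Ts F \<longleftrightarrow> (\<forall>T\<in>Ts. agrees L F T)"

definition inh_edge :: "'a ctree set \<Rightarrow> 'a ctree set \<Rightarrow> 'a ctree \<Rightarrow> 'a ctree \<Rightarrow> bool" where
  "inh_edge Ts F C D \<longleftrightarrow> C \<in> F \<and> D \<in> F \<and> C \<noteq> D \<and>
     (\<exists>T\<in>Ts. span_root T (labels D) \<subseteq> span_root T (labels C))"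

definition inh_graph :: "'a ctree set \<Rightarrow> 'a ctree set \<Rightarrow> ('a ctree \<times> 'a ctree) set" where
  "inh_graph Ts F = {(C, D). inh_edge Ts F C D}"

definition AAF :: "'a set \<Rightarrow> 'a ctree set \<Rightarrow> 'a ctree set \<Rightarrow> bool" where
  "AAF L Ts F \<longleftrightarrow> agreement_forest L Ts F \<and> acyclic (inh_graph Ts F)"

definition topological_ordering :: "'a ctree set \<Rightarrow> 'a ctree set \<Rightarrow> 'a ctree list \<Rightarrow> bool" where
  "topological_ordering Ts F Cs \<longleftrightarrow> distinct Cs \<and> set Cs = F \<and>
     (\<forall>a < length Cs. \<forall>b < length Cs. inh_edge Ts F (Cs ! a) (Cs ! b) \<longrightarrow> a < b)"

definition leaf_ordering :: "'a set \<Rightarrow> 'a \<Rightarrow> ('a \<Rightarrow> nat) \<Rightarrow> bool" where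
  "leaf_ordering L \<rho> \<sigma> \<longleftrightarrow> bij_betw \<sigma> (L - {\<rho>}) {0..<card (L - {\<rho>})}"

definition leaf_at :: "'a set \<Rightarrow> 'a \<Rightarrow> ('a \<Rightarrow> nat) \<Rightarrow> nat \<Rightarrow> 'a" where
  "leaf_at L \<rho> \<sigma> k = the_inv_into (L - {\<rho>}) \<sigma> k"

definition T_up :: "'a set \<Rightarrow> 'a \<Rightarrow> ('a \<Rightarrow> nat) \<Rightarrow> 'a ctree \<Rightarrow> nat \<Rightarrow> 'a ctree" where
  "T_up L \<rho> \<sigma> T k = restrict T (insert \<rho> (leaf_at L \<rho> \<sigma> ` {0..k}))"

definition children :: "'a ctree \<Rightarrow> 'a set \<Rightarrow> 'a set set" where
  "children T v = {d \<in> T. d \<subset> v \<and> \<not> (\<exists>e\<in>T. d \<subset> e \<and> e \<subset> v)}"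

definition mu :: "'a \<Rightarrow> ('a \<Rightarrow> nat) \<Rightarrow> 'a set \<Rightarrow> nat" where
  "mu \<rho> \<sigma> v = Min (\<sigma> ` (v - {\<rho>}))"

definition idx :: "'a \<Rightarrow> ('a \<Rightarrow> nat) \<Rightarrow> 'a ctree \<Rightarrow> 'a set \<Rightarrow> int" where
  "idx \<rho> \<sigma> T v = (if children T v = {} then int (\<sigma> (the_elem v))
                    else - int (Max (mu \<rho> \<sigma> ` children T v)))"

end

theory Submission
  imports Defs
begin

lemma span_root_props:
  assumes t: "is_tree L \<rho> T" and Y: "Y \<subseteq> L" "Y \<noteq> {}"
  shows "span_root T Y \<in> T \<and> Y \<subseteq> span_root T Y \<and> (\<forall>d\<in>T. Y \<subseteq> d \<longrightarrow> span_root T Y \<subseteq> d)"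
proof -
  have finL: "finite L" and LT: "L \<in> T" and sub: "\<forall>c\<in>T. c \<subseteq> L"
    and lam: "\<forall>c\<in>T. \<forall>d\<in>T. c \<subseteq> d \<or> d \<subseteq> c \<or> c \<inter> d = {}"
    using t unfolding is_tree_def by auto
  obtain c where c: "c \<in> T" "Y \<subseteq> c" and cm: "\<forall>d. d \<in> T \<and> Y \<subseteq> d \<longrightarrow> card c \<le> card d"
    using ex_has_least_nat[of "\<lambda>d. d \<in> T \<and> Y \<subseteq> d" L card] LT Y by auto
  have min: "\<forall>d\<in>T. Y \<subseteq> d \<longrightarrow> c \<subseteq> d"
  proof (intro ballI impI)
    fix d assume d: "d \<in> T" "Y \<subseteq> d"
    have "c \<subseteq> d \<or> d \<subseteq> c \<or> c \<inter> d = {}" using lam c d by blast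
    moreover have "c \<inter> d \<noteq> {}" using c d Y by blast
    moreover have "\<not> d \<subset> c"
    proof
      assume "d \<subset> c"
      moreover have "finite c" using sub c finL finite_subset by blast
      ultimately have "card d < card c" by (simp add: psubset_card_mono)
      with cm d show False by force
    qed
    ultimately show "c \<subseteq> d" by blast
  qed
  have ex1: "\<exists>!c. c \<in> T \<and> Y \<subseteq> c \<and> (\<forall>d\<in>T. Y \<subseteq> d \<longrightarrow> c \<subseteq> d)"
    using c min by (metis subset_antisym)
  show ?thesis using theI'[OF ex1] unfolding span_root_def by blast
qed

lemma restrict_restrict: "X \<subseteq> A \<Longrightarrow> restrict (restrict T A) X = restrict T X"
proof (rule set_eqI, rule iffI)
  fix d assume X: "X \<subseteq> A" and "d \<in> restrict (restrict T A) X"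
  then obtain c where "c \<in> T" "d = c \<inter> A \<inter> X" "c \<inter> A \<inter> X \<noteq> {}"
    unfolding restrict_def by blast
  moreover have "c \<inter> A \<inter> X = c \<inter> X" using X by blast
  ultimately show "d \<in> restrict T X" unfolding restrict_def by auto
next
  fix d assume X: "X \<subseteq> A" and "d \<in> restrict T X"
  then obtain c where c: "c \<in> T" "d = c \<inter> X" "c \<inter> X \<noteq> {}"
    unfolding restrict_def by blast
  have e: "c \<inter> A \<inter> X = c \<inter> X" using X by blast
  have "c \<inter> A \<in> restrict T A" using c X unfolding restrict_def by blast
  then show "d \<in> restrict (restrict T A) X" using c e unfolding restrict_def by blast
qed

lemma subtree_restrict:
  assumes lam: "\<forall>c\<in>T. \<forall>d\<in>T. c \<subseteq> d \<or> d \<subseteq> c \<or> c \<inter> d = {}"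
    and r: "r \<in> T" "X \<subseteq> r" "r \<inter> S = X"
  shows "subtree (restrict T S) X = restrict T X"
proof (rule set_eqI, rule iffI)
  fix d assume "d \<in> subtree (restrict T S) X"
  then obtain c where c: "c \<in> T" "d = c \<inter> S" "c \<inter> S \<noteq> {}" "c \<inter> S \<subseteq> X"
    unfolding subtree_def restrict_def by auto
  have "c \<inter> X = c \<inter> S" using c r by blast
  then show "d \<in> restrict T X" using c unfolding restrict_def by auto
next
  fix d assume "d \<in> restrict T X"
  then obtain c where c: "c \<in> T" "d = c \<inter> X" "c \<inter> X \<noteq> {}"
    unfolding restrict_def by auto
  have "c \<subseteq> r \<or> r \<subseteq> c \<or> c \<inter> r = {}" using lam c r by blast
  moreover {
    assume "c \<subseteq> r"
    then have "c \<inter> S = c \<inter> X" using r by blast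
    then have "d \<in> subtree (restrict T S) X" using c unfolding subtree_def restrict_def by auto }
  moreover {
    assume "r \<subseteq> c"
    then have "d = r \<inter> S" using r c by blast
    then have "d \<in> subtree (restrict T S) X" using c r unfolding subtree_def restrict_def by auto }
  moreover have "c \<inter> r \<noteq> {}" using c r by blast
  ultimately show "d \<in> subtree (restrict T S) X" by blast
qed

lemma children_subtree:
  assumes "v \<subseteq> X" shows "children T v = children (subtree T X) v"
proof -
  have "\<And>d. (d \<in> T \<and> d \<subset> v) = (d \<in> subtree T X \<and> d \<subset> v)"
    using assms unfolding subtree_def by blast
  then show ?thesis unfolding children_def by (metis (no_types, lifting) psubset_trans)
qed

lemma idx_subtree: "v \<subseteq> X \<Longrightarrow> idx \<rho> \<sigma> T v = idx \<rho> \<sigma> (subtree T X) v"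
  unfolding idx_def using children_subtree by metis

lemma labels_subtree: "v \<in> T \<Longrightarrow> labels (subtree T v) = v"
  unfolding labels_def subtree_def by auto

theorem lemma1:
  fixes L :: "'a set" and \<rho> :: 'a and Ts :: "'a ctree set" and Cs :: "'a ctree list"
    and \<sigma> :: "'a \<Rightarrow> nat" and i j :: nat
  assumes trees: "\<forall>T\<in>Ts. is_tree L \<rho> T"
    and two: "card Ts \<ge> 2"
    and aaf: "AAF L Ts (set Cs)"
    and topo: "topological_ordering Ts (set Cs) Cs"
    and lo: "leaf_ordering L \<rho> \<sigma>"
    and sep: "\<forall>a b. a < b \<and> b < length Cs \<longrightarrow>
               (\<forall>l\<in>labels (Cs ! a) - {\<rho>}. \<forall>l'\<in>labels (Cs ! b) - {\<rho>}. \<sigma> l < \<sigma> l')"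
    and i: "i < length Cs" "labels (Cs ! i) - {\<rho>} \<noteq> {}"
    and j: "j < card (L - {\<rho>})" "leaf_at L \<rho> \<sigma> j \<in> labels (Cs ! i)"
    and sj: "Min (\<sigma> ` (labels (Cs ! i) - {\<rho>})) \<le> j"
  shows "\<exists>x. (\<forall>T\<in>Ts. x T \<in> T_up L \<rho> \<sigma> T j \<and>
              subtree (T_up L \<rho> \<sigma> T j) (x T) =
                restrict (Cs ! i) (leaf_at L \<rho> \<sigma> ` {Min (\<sigma> ` (labels (Cs ! i) - {\<rho>}))..j}
                                   \<inter> labels (Cs ! i))) \<and>
             (\<forall>T\<in>Ts. \<forall>T'\<in>Ts. \<forall>v\<in>subtree (T_up L \<rho> \<sigma> T j) (x T).
                \<forall>v'\<in>subtree (T_up L \<rho> \<sigma> T' j) (x T').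
                labels (subtree (T_up L \<rho> \<sigma> T j) v) = labels (subtree (T_up L \<rho> \<sigma> T' j) v') \<longrightarrow>
                idx \<rho> \<sigma> (T_up L \<rho> \<sigma> T j) v = idx \<rho> \<sigma> (T_up L \<rho> \<sigma> T' j) v')"
proof -
  define S where "S = insert \<rho> (leaf_at L \<rho> \<sigma> ` {0..j})"
  define A where "A = labels (Cs ! i)"
  define m where "m = Min (\<sigma> ` (labels (Cs ! i) - {\<rho>}))"
  define X where "X = leaf_at L \<rho> \<sigma> ` {Min (\<sigma> ` (labels (Cs ! i) - {\<rho>}))..j} \<inter> labels (Cs ! i)"
  define C where "C = Cs ! i"
  have Xd: "X = leaf_at L \<rho> \<sigma> ` {m..j} \<inter> A" unfolding X_def m_def A_def ..
  have TS: "\<And>T. T_up L \<rho> \<sigma> T j = restrict T S" unfolding T_up_def S_def ..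
  define n where "n = card (L - {\<rho>})"
  have bij: "bij_betw \<sigma> (L - {\<rho>}) {0..<n}" using lo unfolding leaf_ordering_def n_def .
  have inj: "inj_on \<sigma> (L - {\<rho>})" and img: "\<sigma> ` (L - {\<rho>}) = {0..<n}"
    using bij unfolding bij_betw_def by auto
  have lf1: "leaf_at L \<rho> \<sigma> k \<in> L - {\<rho>} \<and> \<sigma> (leaf_at L \<rho> \<sigma> k) = k" if "k < n" for k
  proof -
    have k: "k \<in> \<sigma> ` (L - {\<rho>})" using img that by auto
    show ?thesis unfolding leaf_at_def
      using the_inv_into_into[OF inj k order.refl] f_the_inv_into_f[OF inj k] by simp
  qed
  have jn: "j < n" using j(1) n_def by simp
  define lj where "lj = leaf_at L \<rho> \<sigma> j"
  have lj: "lj \<in> L - {\<rho>}" "\<sigma> lj = j" "lj \<in> A" using lf1[OF jn] j(2) unfolding lj_def A_def by auto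
  have ag: "agrees L (set Cs) T" if "T \<in> Ts" for T
    using aaf that unfolding AAF_def agreement_forest_def by blast
  obtain T0 where T0: "T0 \<in> Ts" proof -
    have "Ts \<noteq> {}" using two by (metis card.empty not_numeral_le_zero)
    then show ?thesis using that by blast
  qed
  have unionL: "\<Union> (labels ` set Cs) = L" using ag[OF T0] unfolding agrees_def by blast
  have Cin: "C \<in> set Cs" using i(1) C_def by simp
  have AL: "A \<subseteq> L" using unionL Cin A_def C_def by blast
  have finL: "finite L" using trees T0 unfolding is_tree_def by blast
  have mle: "m \<le> \<sigma> y" if "y \<in> A - {\<rho>}" for y
    unfolding m_def using that A_def finite_subset[OF _ finL] AL by (intro Min_le) auto
  have mj: "m \<le> j" using sj m_def by simp
  have ljX: "lj \<in> X" unfolding Xd lj_def using mj lj(3) lj_def by auto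
  have XA: "X \<subseteq> A" unfolding Xd by blast
  have XS: "X \<subseteq> S" unfolding Xd S_def by auto
  have XL: "X \<subseteq> L - {\<rho>}" unfolding Xd using lf1 jn by fastforce
  have XC: "restrict C X = restrict T X" if "T \<in> Ts" for T
  proof -
    have "restrict T A = C" using ag[OF that] Cin unfolding agrees_def A_def C_def by blast
    then show ?thesis using restrict_restrict[OF XA, of T] by simp
  qed
  have key: "X \<in> restrict T S \<and> subtree (restrict T S) X = restrict C X" if T: "T \<in> Ts" for T
  proof -
    have tr: "is_tree L \<rho> T" using trees T by blast
    have lam: "\<forall>c\<in>T. \<forall>d\<in>T. c \<subseteq> d \<or> d \<subseteq> c \<or> c \<inter> d = {}"
      and LrT: "L - {\<rho>} \<in> T" using tr unfolding is_tree_def by auto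
    define r where "r = span_root T X"
    have r: "r \<in> T" "X \<subseteq> r" "\<forall>d\<in>T. X \<subseteq> d \<longrightarrow> r \<subseteq> d"
      using span_root_props[OF tr, of X] XL ljX unfolding r_def by auto
    have rL: "r \<subseteq> L - {\<rho>}" using r LrT XL by blast
    define rA where "rA = span_root T A"
    have rA: "rA \<in> T" "A \<subseteq> rA"
      using span_root_props[OF tr, of A] AL lj(3) unfolding rA_def by auto
    have rrA: "r \<subseteq> rA" using r rA XA by blast
    have agT: "agrees L (set Cs) T" using ag T .
    have rSX: "r \<inter> S \<subseteq> X"
    proof
      fix y assume y: "y \<in> r \<inter> S"
      have yr: "y \<noteq> \<rho>" using y rL by blast
      then obtain k where k: "k \<le> j" "y = leaf_at L \<rho> \<sigma> k" using y unfolding S_def by auto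
      have kn: "k < n" using k jn by simp
      have sy: "\<sigma> y = k" using lf1[OF kn] k by simp
      have yL: "y \<in> L" using y rL by blast
      then obtain D where D: "D \<in> set Cs" "y \<in> labels D" using unionL by blast
      then obtain b where b: "b < length Cs" "D = Cs ! b" by (metis in_set_conv_nth)
      have yA: "y \<in> A"
      proof (cases "b = i")
        case True then show ?thesis using D b A_def by simp
      next
        case False
        show ?thesis
        proof (cases "i < b")
          case True
          then have "\<sigma> lj < \<sigma> y" using sep b lj D yr A_def by blast
          then show ?thesis using lj sy k by simp
        next
          case False
          with \<open>b \<noteq> i\<close> have bi: "b < i" by simp
          have CD: "C \<noteq> D" using b i(1) bi C_def topo unfolding topological_ordering_def
            by (simp add: nth_eq_iff_index_eq)
          define rD where "rD = span_root T (labels D)"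
          have DL: "labels D \<subseteq> L" using unionL D by blast
          have rD: "rD \<in> T" "labels D \<subseteq> rD"
            using span_root_props[OF tr, of "labels D"] DL D unfolding rD_def by auto
          have "y \<in> rD" using rD D by blast
          then have "r \<subseteq> rD \<or> rD \<subseteq> r" using lam r rD y by blast
          then show ?thesis
          proof
            assume "rD \<subseteq> r"
            then have "inh_edge Ts (set Cs) C D"
              unfolding inh_edge_def using Cin D CD T rrA rD_def rA_def A_def C_def by blast
            then have "i < b" using topo i(1) b unfolding topological_ordering_def C_def by blast
            then show ?thesis using bi by simp
          next
            assume "r \<subseteq> rD"
            have "r \<in> span_vertices T A" unfolding span_vertices_def
              using r rrA ljX XA rA_def by blast
            moreover have "r \<in> span_vertices T (labels D)" unfolding span_vertices_def
              using r \<open>r \<subseteq> rD\<close> D y rD_def by blast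
            moreover have "span_vertices T (labels C) \<inter> span_vertices T (labels D) = {}"
              using agT Cin D CD unfolding agrees_def by blast
            ultimately show ?thesis using A_def C_def by blast
          qed
        qed
      qed
      then have "m \<le> k" using mle yr sy by force
      then show "y \<in> X" unfolding Xd using k yA by auto
    qed
    have rS: "r \<inter> S = X" using rSX r XS by blast
    have "X \<in> restrict T S" unfolding restrict_def using r rS ljX by blast
    moreover have "subtree (restrict T S) X = restrict T X"
      using subtree_restrict[OF lam r(1) r(2) rS] .
    ultimately show ?thesis using XC T by simp
  qed
  have main: "\<exists>x. (\<forall>T\<in>Ts. x T \<in> T_up L \<rho> \<sigma> T j \<and>
              subtree (T_up L \<rho> \<sigma> T j) (x T) = restrict (Cs ! i) X) \<and>
             (\<forall>T\<in>Ts. \<forall>T'\<in>Ts. \<forall>v\<in>subtree (T_up L \<rho> \<sigma> T j) (x T).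
                \<forall>v'\<in>subtree (T_up L \<rho> \<sigma> T' j) (x T').
                labels (subtree (T_up L \<rho> \<sigma> T j) v) = labels (subtree (T_up L \<rho> \<sigma> T' j) v') \<longrightarrow>
                idx \<rho> \<sigma> (T_up L \<rho> \<sigma> T j) v = idx \<rho> \<sigma> (T_up L \<rho> \<sigma> T' j) v')"
  proof (rule exI[of _ "\<lambda>T. X"], intro conjI ballI impI)
    fix T assume "T \<in> Ts"
    then show "X \<in> T_up L \<rho> \<sigma> T j" "subtree (T_up L \<rho> \<sigma> T j) X = restrict (Cs ! i) X"
      using key TS C_def by auto
  next
    fix T T' v v'
    assume T: "T \<in> Ts" and T': "T' \<in> Ts" and v: "v \<in> subtree (T_up L \<rho> \<sigma> T j) X"
      and v': "v' \<in> subtree (T_up L \<rho> \<sigma> T' j) X"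
      and eq: "labels (subtree (T_up L \<rho> \<sigma> T j) v) = labels (subtree (T_up L \<rho> \<sigma> T' j) v')"
    have vin: "v \<in> T_up L \<rho> \<sigma> T j" "v \<subseteq> X" using v unfolding subtree_def by auto
    have vin': "v' \<in> T_up L \<rho> \<sigma> T' j" "v' \<subseteq> X" using v' unfolding subtree_def by auto
    have vv: "v = v'" using eq labels_subtree[OF vin(1)] labels_subtree[OF vin'(1)] by simp
    have "idx \<rho> \<sigma> (T_up L \<rho> \<sigma> T j) v = idx \<rho> \<sigma> (restrict C X) v"
      using idx_subtree[OF vin(2), of _ _ "T_up L \<rho> \<sigma> T j"] key[OF T] TS by simp
    moreover have "idx \<rho> \<sigma> (T_up L \<rho> \<sigma> T' j) v' = idx \<rho> \<sigma> (restrict C X) v'"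
      using idx_subtree[OF vin'(2), of _ _ "T_up L \<rho> \<sigma> T' j"] key[OF T'] TS by simp
    ultimately show "idx \<rho> \<sigma> (T_up L \<rho> \<sigma> T j) v = idx \<rho> \<sigma> (T_up L \<rho> \<sigma> T' j) v'"
      using vv by simp
  qed
  then show ?thesis unfolding X_def .
qed

end
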